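(* Let $\mathcal{A}$ be a central S-ring over a finite group $G$ with $n=|G|$. Then the sets $\mathrm{tr}(X)$, $X\in\mathcal{S}(\mathcal{A})$, form a partition of $G$, and $\mathrm{tr}(\mathcal{A})=\mathrm{Span}_{\mathbb{Z}}\{\underline{\mathrm{tr}(X)}: X\in\mathcal{S}(\mathcal{A})\}$ is a central S-ring over $G$ contained in $\mathcal{A}$; it consists exactly of the elements of $\mathcal{A}$ fixed by all the linear maps $\underline{X}\mapsto\underline{X^{(m)}}$ ($X\in\mathcal{S}(\mathcal{A})$), $m$ coprime to $n$.
   Context: For a finite group $G$ with identity $e$ and $X\subseteq G$, write $\underline{X}=\sum_{x\in X}x\in\mathbb{Z}G$. A subring $\mathcal{A}$ of $\mathbb{Z}G$ is an S-ring over $G$ if there is a partition $\mathcal{S}(\mathcal{A})$ of $G$ (basic sets) such that $\{e\}\in\mathcal{S}(\mathcal{A})$, $X\in\mathcal{S}(\mathcal{A})\Rightarrow X^{-1}\in\mathcal{S}(\mathcal{A})$, and $\mathcal{A}$ is the $\mathbb{Z}$-span of $\{\underline{X}: X\in\mathcal{S}(\mathcal{A})\}$. $\mathcal{A}$ is central if $\mathcal{A}\subseteq\mathcal{Z}(\mathbb{Z}G)$. For an integer $m$, $X^{(m)}=\{x^m:x\in X\}$. The trace of $X\subseteq G$ is $\mathrm{tr}(X)=\bigcup_{m:\ \gcd(m,|G|)=1}X^{(m)}$. *)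

theory Defs
  imports "HOL-Algebra.Group"
begin

text \<open>Elements of the group ring ZG: integer-valued functions on carrier G (zero outside).\<close>
definition ZG :: "('a, 'b) monoid_scheme \<Rightarrow> ('a \<Rightarrow> int) set" where
  "ZG G = {f. \<forall>x. x \<notin> carrier G \<longrightarrow> f x = 0}"

text \<open>The element underline X = sum of elements of X.\<close>
definition und :: "'a set \<Rightarrow> ('a \<Rightarrow> int)" where
  "und X = (\<lambda>x. if x \<in> X then 1 else 0)"

definition gmult :: "('a, 'b) monoid_scheme \<Rightarrow> ('a \<Rightarrow> int) \<Rightarrow> ('a \<Rightarrow> int) \<Rightarrow> ('a \<Rightarrow> int)" where
  "gmult G f h = (\<lambda>z. if z \<in> carrier G
      then (\<Sum>x\<in>carrier G. f x * h (inv\<^bsub>G\<^esub> x \<otimes>\<^bsub>G\<^esub> z)) else 0)"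

definition zspan :: "'a set set \<Rightarrow> ('a \<Rightarrow> int) set" where
  "zspan P = {f. \<exists>c :: 'a set \<Rightarrow> int. f = (\<lambda>g. \<Sum>X\<in>P. c X * und X g)}"

definition is_partition :: "('a, 'b) monoid_scheme \<Rightarrow> 'a set set \<Rightarrow> bool" where
  "is_partition G P \<longleftrightarrow> (\<forall>X\<in>P. X \<noteq> {} \<and> X \<subseteq> carrier G) \<and> \<Union>P = carrier G
      \<and> (\<forall>X\<in>P. \<forall>Y\<in>P. X \<noteq> Y \<longrightarrow> X \<inter> Y = {})"

definition inv_set :: "('a, 'b) monoid_scheme \<Rightarrow> 'a set \<Rightarrow> 'a set" where
  "inv_set G X = (\<lambda>x. inv\<^bsub>G\<^esub> x) ` X"

definition pow_set :: "('a, 'b) monoid_scheme \<Rightarrow> 'a set \<Rightarrow> int \<Rightarrow> 'a set" where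
  "pow_set G X m = (\<lambda>x. x [^]\<^bsub>G\<^esub> m) ` X"

definition tr :: "('a, 'b) monoid_scheme \<Rightarrow> 'a set \<Rightarrow> 'a set" where
  "tr G X = (\<Union>m\<in>{m :: int. coprime m (int (card (carrier G)))}. pow_set G X m)"

definition S_ring :: "('a, 'b) monoid_scheme \<Rightarrow> ('a \<Rightarrow> int) set \<Rightarrow> 'a set set \<Rightarrow> bool" where
  "S_ring G A S \<longleftrightarrow>
     A \<subseteq> ZG G \<and> und {\<one>\<^bsub>G\<^esub>} \<in> A
     \<and> (\<forall>a\<in>A. \<forall>b\<in>A. (\<lambda>x. a x + b x) \<in> A \<and> (\<lambda>x. - a x) \<in> A \<and> gmult G a b \<in> A)
     \<and> is_partition G S \<and> {\<one>\<^bsub>G\<^esub>} \<in> S \<and> (\<forall>X\<in>S. inv_set G X \<in> S)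
     \<and> A = zspan S"

definition central :: "('a, 'b) monoid_scheme \<Rightarrow> ('a \<Rightarrow> int) set \<Rightarrow> bool" where
  "central G A \<longleftrightarrow> (\<forall>a\<in>A. \<forall>f\<in>ZG G. gmult G a f = gmult G f a)"

text \<open>The linear map on A determined by underline X |-> underline X^(m), X in S.
  (Elements of A are constant on each basic set, so the coefficient of underline X in a
  is the value of a at any point of X.)\<close>
definition phi :: "('a, 'b) monoid_scheme \<Rightarrow> 'a set set \<Rightarrow> int \<Rightarrow> ('a \<Rightarrow> int) \<Rightarrow> ('a \<Rightarrow> int)" where
  "phi G S m a = (\<lambda>g. \<Sum>X\<in>S. a (SOME x. x \<in> X) * und (pow_set G X m) g)"

end

theory Submission
  imports Defs "HOL-Algebra.Group_Action" "HOL-Algebra.Multiplicative_Group" "HOL-Number_Theory.Residues"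
begin


lemma (in group) inv_cancel1 [simp]: "x \<in> carrier G \<Longrightarrow> y \<in> carrier G \<Longrightarrow> inv x \<otimes> (x \<otimes> y) = y"
  by (simp add: m_assoc[symmetric])
lemma (in group) inv_cancel2 [simp]: "x \<in> carrier G \<Longrightarrow> y \<in> carrier G \<Longrightarrow> x \<otimes> (inv x \<otimes> y) = y"
  by (simp add: m_assoc[symmetric])

lemma (in group) sum_lmult_reindex:
  assumes "y \<in> carrier G"
  shows "(\<Sum>x\<in>carrier G. F x) = (\<Sum>w\<in>carrier G. F (y \<otimes> w))"
  by (rule sum.reindex_bij_witness[where j="\<lambda>x. inv y \<otimes> x" and i="\<lambda>w. y \<otimes> w"])
     (auto simp: assms)

lemma (in group) sum_conj_reindex:
  assumes "h \<in> carrier G"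
  shows "(\<Sum>x\<in>carrier G. F x) = (\<Sum>y\<in>carrier G. F (h \<otimes> y \<otimes> inv h))"
  by (rule sum.reindex_bij_witness[where j="\<lambda>x. inv h \<otimes> x \<otimes> h" and i="\<lambda>y. h \<otimes> y \<otimes> inv h"])
     (auto simp: assms m_assoc)

lemma (in group) gmult_assoc:
  "gmult G (gmult G f g) h = gmult G f (gmult G g h)"
proof (rule ext)
  fix z
  show "gmult G (gmult G f g) h z = gmult G f (gmult G g h) z"
  proof (cases "z \<in> carrier G")
    case False then show ?thesis by (simp add: gmult_def)
  next
    case z: True
    have "gmult G (gmult G f g) h z = (\<Sum>x\<in>carrier G. (\<Sum>y\<in>carrier G. f y * g (inv y \<otimes> x)) * h (inv x \<otimes> z))"
      using z by (simp add: gmult_def)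
    also have "\<dots> = (\<Sum>x\<in>carrier G. \<Sum>y\<in>carrier G. f y * (g (inv y \<otimes> x) * h (inv x \<otimes> z)))"
      by (simp add: sum_distrib_right mult.assoc)
    also have "\<dots> = (\<Sum>y\<in>carrier G. \<Sum>x\<in>carrier G. f y * (g (inv y \<otimes> x) * h (inv x \<otimes> z)))"
      by (rule sum.swap)
    also have "\<dots> = (\<Sum>y\<in>carrier G. f y * (\<Sum>x\<in>carrier G. g (inv y \<otimes> x) * h (inv x \<otimes> z)))"
      by (simp add: sum_distrib_left)
    also have "\<dots> = (\<Sum>y\<in>carrier G. f y * (\<Sum>w\<in>carrier G. g w * h (inv w \<otimes> (inv y \<otimes> z))))"
    proof (rule sum.cong[OF refl])
      fix y assume y: "y \<in> carrier G"
      have "(\<Sum>x\<in>carrier G. g (inv y \<otimes> x) * h (inv x \<otimes> z)) =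
            (\<Sum>w\<in>carrier G. g (inv y \<otimes> (y \<otimes> w)) * h (inv (y \<otimes> w) \<otimes> z))"
        by (rule sum_lmult_reindex[OF y])
      also have "\<dots> = (\<Sum>w\<in>carrier G. g w * h (inv w \<otimes> (inv y \<otimes> z)))"
        using y z by (intro sum.cong refl) (simp add: inv_mult_group m_assoc[symmetric])
      finally show "f y * (\<Sum>x\<in>carrier G. g (inv y \<otimes> x) * h (inv x \<otimes> z)) =
            f y * (\<Sum>w\<in>carrier G. g w * h (inv w \<otimes> (inv y \<otimes> z)))" by simp
    qed
    also have "\<dots> = gmult G f (gmult G g h) z"
      using z by (simp add: gmult_def)
    finally show ?thesis .
  qed
qed

definition classfun :: "('a, 'b) monoid_scheme \<Rightarrow> ('a \<Rightarrow> int) \<Rightarrow> bool" where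
  "classfun G a \<longleftrightarrow> (\<forall>h\<in>carrier G. \<forall>x\<in>carrier G. a (h \<otimes>\<^bsub>G\<^esub> x \<otimes>\<^bsub>G\<^esub> inv\<^bsub>G\<^esub> h) = a x)"

lemma (in group) gmult_classfun:
  assumes "classfun G a" "classfun G b"
  shows "classfun G (gmult G a b)"
  unfolding classfun_def
proof (intro ballI)
  fix h z assume h: "h \<in> carrier G" and z: "z \<in> carrier G"
  have "gmult G a b (h \<otimes> z \<otimes> inv h) = (\<Sum>x\<in>carrier G. a x * b (inv x \<otimes> (h \<otimes> z \<otimes> inv h)))"
    using h z by (simp add: gmult_def)
  also have "\<dots> = (\<Sum>y\<in>carrier G. a (h \<otimes> y \<otimes> inv h) * b (inv (h \<otimes> y \<otimes> inv h) \<otimes> (h \<otimes> z \<otimes> inv h)))"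
    by (rule sum_conj_reindex[OF h])
  also have "\<dots> = (\<Sum>y\<in>carrier G. a y * b (inv y \<otimes> z))"
  proof (intro sum.cong refl)
    fix y assume y: "y \<in> carrier G"
    have e: "inv (h \<otimes> y \<otimes> inv h) \<otimes> (h \<otimes> z \<otimes> inv h) = h \<otimes> (inv y \<otimes> z) \<otimes> inv h"
      using h y z by (simp add: inv_mult_group m_assoc)
    show "a (h \<otimes> y \<otimes> inv h) * b (inv (h \<otimes> y \<otimes> inv h) \<otimes> (h \<otimes> z \<otimes> inv h)) = a y * b (inv y \<otimes> z)"
      unfolding e using assms h y z by (simp add: classfun_def)
  qed
  also have "\<dots> = gmult G a b z" using z by (simp add: gmult_def)
  finally show "gmult G a b (h \<otimes> z \<otimes> inv h) = gmult G a b z" .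
qed

lemma (in group) conj_one_iff:
  assumes "h \<in> carrier G" "x \<in> carrier G"
  shows "(h \<otimes> x \<otimes> inv h = \<one>) = (x = \<one>)"
proof
  assume e: "h \<otimes> x \<otimes> inv h = \<one>"
  have "x = inv h \<otimes> (h \<otimes> x \<otimes> inv h) \<otimes> h" using assms by (simp add: m_assoc)
  thus "x = \<one>" using e assms by simp
qed (use assms in simp)

lemma (in group) und_one_classfun: "classfun G (und {\<one>})"
  unfolding classfun_def und_def by (auto simp: conj_one_iff)

locale fgroup = group G for G (structure) + assumes fin: "finite (carrier G)"

lemma (in fgroup) gmult_und_right:
  assumes "h \<in> carrier G" "z \<in> carrier G"
  shows "gmult G a (und {h}) z = a (z \<otimes> inv h)"
proof -
  have "gmult G a (und {h}) z = (\<Sum>x\<in>carrier G. if x = z \<otimes> inv h then a x else 0)"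
    using assms unfolding gmult_def und_def
    by (auto intro!: sum.cong simp: inv_solve_left inv_solve_right m_assoc)
  also have "\<dots> = a (z \<otimes> inv h)" using assms fin by (simp add: sum.delta)
  finally show ?thesis .
qed

lemma (in fgroup) gmult_und_left:
  assumes "h \<in> carrier G" "z \<in> carrier G"
  shows "gmult G (und {h}) a z = a (inv h \<otimes> z)"
proof -
  have "gmult G (und {h}) a z = (\<Sum>x\<in>carrier G. if x = h then a (inv h \<otimes> z) else 0)"
    using assms unfolding gmult_def und_def
    by (auto intro!: sum.cong)
  also have "\<dots> = a (inv h \<otimes> z)" using assms fin by (simp add: sum.delta)
  finally show ?thesis .
qed

lemma (in group) und_ZG: "X \<subseteq> carrier G \<Longrightarrow> und X \<in> ZG G"
  unfolding ZG_def und_def by auto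

lemma (in fgroup) central_classfun:
  assumes "\<forall>f\<in>ZG G. gmult G a f = gmult G f a"
  shows "classfun G a"
  unfolding classfun_def
proof (intro ballI)
  fix h x assume h: "h \<in> carrier G" and x: "x \<in> carrier G"
  have "gmult G a (und {h}) (h \<otimes> x) = gmult G (und {h}) a (h \<otimes> x)"
    using assms und_ZG[of "{h}"] h by auto
  thus "a (h \<otimes> x \<otimes> inv h) = a x"
    using h x by (simp add: gmult_und_right gmult_und_left m_assoc[symmetric])
qed



lemma fermat_int:
  fixes a :: int assumes q: "prime q" shows "[a ^ q = a] (mod int q)"
proof -
  define b where "b = nat (a mod int q)"
  have qpos: "q > 0" using q prime_gt_0_nat by blast
  have bb: "int b = a mod int q" unfolding b_def using qpos by simp
  have ab: "[a = int b] (mod int q)" unfolding bb cong_def by simp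
  have nb: "[b ^ q = b] (mod q)"
  proof (cases "q dvd b")
    case True
    have "b ^ q = b * b ^ (q - 1)" using qpos by (metis Suc_diff_1 power_Suc)
    then have "q dvd b ^ q" using True by simp
    then show ?thesis using True by (simp add: cong_def dvd_eq_mod_eq_0)
  next
    case False
    have "[b ^ (q - 1) = 1] (mod q)" using fermat_theorem[OF q False] .
    then have "[b ^ (q - 1) * b = 1 * b] (mod q)" by (rule cong_scalar_right)
    moreover have "b ^ (q - 1) * b = b ^ q" using qpos
      by (metis Suc_diff_1 power_Suc2)
    ultimately show ?thesis by simp
  qed
  then have "[int b ^ q = int b] (mod int q)"
    by (metis cong_int_iff of_nat_power)
  moreover have "[a ^ q = int b ^ q] (mod int q)" using ab by (rule cong_pow)
  ultimately have "[a ^ q = int b] (mod int q)" by (meson cong_trans)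
  then show ?thesis using ab cong_sym cong_trans by blast
qed

lemma rotate_mult_fixed:
  assumes "rotate d x = x" shows "rotate (d * k) x = x"
proof (induction k)
  case 0 then show ?case by simp
next
  case (Suc k)
  have "rotate (d * Suc k) x = rotate d (rotate (d * k) x)"
    by (simp add: rotate_rotate add.commute)
  also have "\<dots> = x" using Suc assms by simp
  finally show ?case .
qed

lemma rotate_prime_fixed:
  assumes q: "prime q" and len: "length x = q" and d: "0 < d" "d < q" and r: "rotate d x = x"
  shows "rotate1 x = x"
proof -
  have "coprime d q" using q d
    by (metis coprime_commute nat_dvd_not_less prime_imp_coprime_nat)
  then obtain k where k: "[d * k = Suc 0] (mod q)" using cong_solve_coprime_nat by blast
  have q2: "q \<ge> 2" using q prime_ge_2_nat by blast
  have "rotate (d * k) x = x" using r by (rule rotate_mult_fixed)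
  moreover have "rotate (d * k) x = rotate ((d * k) mod q) x" using rotate_conv_mod len by metis
  moreover have "(d * k) mod q = 1" using k q2 by (simp add: cong_def)
  ultimately show ?thesis by simp
qed

lemma rotate_in_closed:
  assumes "\<forall>xs\<in>T. rotate1 xs \<in> T" "x \<in> T" shows "rotate i x \<in> T"
  by (induction i) (use assms in auto)

lemma rotate_w_const:
  assumes "\<forall>xs. w (rotate1 xs) = w xs" shows "w (rotate i x) = w x"
  by (induction i) (use assms in auto)

lemma rot_orbit_dvd:
  fixes w :: "'c list \<Rightarrow> int"
  assumes q: "prime q" and w: "\<forall>xs. w (rotate1 xs) = w xs"
  shows "finite T \<Longrightarrow> \<forall>xs\<in>T. length xs = q \<and> rotate1 xs \<in> T \<and> rotate1 xs \<noteq> xs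
     \<Longrightarrow> int q dvd (\<Sum>xs\<in>T. w xs)"
proof (induction "card T" arbitrary: T rule: less_induct)
  case less
  show ?case
  proof (cases "T = {}")
    case True then show ?thesis by simp
  next
    case False
    then obtain x where x: "x \<in> T" by blast
    have lx: "length x = q" using less.prems x by auto
    have q2: "q \<ge> 2" using q prime_ge_2_nat by blast
    define Orb where "Orb = (\<lambda>i. rotate i x) ` {..<q}"
    have OT: "Orb \<subseteq> T" unfolding Orb_def using rotate_in_closed[of T x] less.prems x by auto
    have aux: False if ij: "i < j" "j < q" "rotate i x = rotate j x" for i j
    proof -
      have r1: "rotate (q - i) (rotate i x) = rotate q x" using ij(1,2) by (simp add: rotate_rotate)
      have r2: "rotate (q - i) (rotate j x) = rotate (q - i + j) x" by (rule rotate_rotate)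
      have "rotate q x = rotate (q - i + j) x" using r1 r2 ij(3) by simp
      moreover have "rotate q x = x" using lx by simp
      moreover have "rotate (q - i + j) x = rotate (j - i) x"
      proof -
        have e: "q - i + j = (j - i) + q" using ij by simp
        have m: "(q - i + j) mod q = j - i" unfolding e mod_add_self2 using ij by simp
        have "rotate (q - i + j) x = rotate ((q - i + j) mod length x) x" by (rule rotate_conv_mod)
        then show ?thesis using m lx by simp
      qed
      ultimately have rji: "rotate (j - i) x = x" by simp
      have "rotate1 x = x" by (rule rotate_prime_fixed[OF q lx, of "j - i"]) (use ij rji in auto)
      then show False using less.prems x by blast
    qed
    have inj: "inj_on (\<lambda>i. rotate i x) {..<q}"
    proof (rule inj_onI)
      fix i j assume "i \<in> {..<q}" "j \<in> {..<q}" "rotate i x = rotate j x"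
      then show "i = j" using aux[of i j] aux[of j i] by (metis lessThan_iff nat_neq_iff)
    qed
    have cardO: "card Orb = q" unfolding Orb_def using card_image[OF inj] by simp
    have sumO: "(\<Sum>xs\<in>Orb. w xs) = int q * w x"
    proof -
      have "(\<Sum>xs\<in>Orb. w xs) = (\<Sum>i<q. w (rotate i x))" unfolding Orb_def
        by (rule sum.reindex[OF inj, unfolded comp_def])
      also have "\<dots> = (\<Sum>i<q. w x)" using rotate_w_const[OF w] by simp
      finally show ?thesis by simp
    qed
    have finT: "finite T" using less.prems by simp
    have rest: "\<forall>xs\<in>T - Orb. length xs = q \<and> rotate1 xs \<in> T - Orb \<and> rotate1 xs \<noteq> xs"
    proof
      fix y assume y: "y \<in> T - Orb"
      have ly: "length y = q" using y less.prems by auto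
      have "rotate1 y \<notin> Orb"
      proof
        assume "rotate1 y \<in> Orb"
        then obtain i where i: "i < q" "rotate1 y = rotate i x" unfolding Orb_def by auto
        have "y = rotate (q - 1) (rotate1 y)"
        proof -
          have "rotate (q - 1) (rotate1 y) = rotate (q - 1) (rotate 1 y)" by simp
          also have "\<dots> = rotate (q - 1 + 1) y" by (rule rotate_rotate)
          also have "\<dots> = y" using ly q2 by simp
          finally show ?thesis by simp
        qed
        also have "\<dots> = rotate (q - 1 + i) x" using i by (simp add: rotate_rotate)
        also have "\<dots> = rotate ((q - 1 + i) mod length x) x" by (rule rotate_conv_mod)
        finally have "y \<in> Orb" unfolding Orb_def using q2 lx by auto
        then show False using y by simp
      qed
      moreover have "rotate1 y \<in> T" "rotate1 y \<noteq> y" using y less.prems by auto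
      ultimately show "length y = q \<and> rotate1 y \<in> T - Orb \<and> rotate1 y \<noteq> y" using ly by blast
    qed
    have "card Orb \<le> card T" by (rule card_mono[OF finT OT])
    moreover have "card (T - Orb) = card T - card Orb"
      using finite_subset[OF OT finT] OT by (simp add: card_Diff_subset)
    ultimately have "card (T - Orb) < card T" using cardO q2 by simp
    then have "int q dvd (\<Sum>xs\<in>T - Orb. w xs)" using less.hyps[of "T - Orb"] rest finT by simp
    moreover have "(\<Sum>xs\<in>T. w xs) = (\<Sum>xs\<in>T - Orb. w xs) + (\<Sum>xs\<in>Orb. w xs)"
      by (rule sum.subset_diff[OF OT finT])
    ultimately show ?thesis using sumO by simp
  qed
qed

lemma rot_sum_cong:
  fixes w :: "'c list \<Rightarrow> int"
  assumes q: "prime q" and w: "\<forall>xs. w (rotate1 xs) = w xs" and fin: "finite T"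
    and T: "\<forall>xs\<in>T. length xs = q \<and> rotate1 xs \<in> T"
  shows "[(\<Sum>xs\<in>T. w xs) = (\<Sum>xs\<in>{xs\<in>T. rotate1 xs = xs}. w xs)] (mod int q)"
proof -
  define F where "F = {xs\<in>T. rotate1 xs = xs}"
  have FT: "F \<subseteq> T" unfolding F_def by blast
  have "\<forall>xs\<in>T - F. length xs = q \<and> rotate1 xs \<in> T - F \<and> rotate1 xs \<noteq> xs"
  proof
    fix xs assume xs: "xs \<in> T - F"
    have n1: "rotate1 xs \<noteq> xs" using xs unfolding F_def by blast
    have "rotate1 (rotate1 xs) \<noteq> rotate1 xs"
      using n1 inj_rotate1 unfolding inj_def by blast
    then have "rotate1 xs \<notin> F" unfolding F_def by blast
    moreover have "length xs = q" "rotate1 xs \<in> T" using xs T by auto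
    ultimately show "length xs = q \<and> rotate1 xs \<in> T - F \<and> rotate1 xs \<noteq> xs" using n1 by blast
  qed
  moreover have "finite (T - F)" using fin by blast
  ultimately have "int q dvd (\<Sum>xs\<in>T - F. w xs)" using rot_orbit_dvd[OF q w] by blast
  moreover have "(\<Sum>xs\<in>T. w xs) = (\<Sum>xs\<in>T - F. w xs) + (\<Sum>xs\<in>F. w xs)"
    by (rule sum.subset_diff[OF FT fin])
  ultimately have "[(\<Sum>xs\<in>T. w xs) = (\<Sum>xs\<in>F. w xs)] (mod int q)"
    by (simp add: cong_iff_dvd_diff)
  then show ?thesis unfolding F_def .
qed

lemma rotate1_fixed_replicate:
  "xs @ [x] = x # xs \<Longrightarrow> xs = replicate (length xs) x"
  by (induction xs) auto

lemma rotate1_fixed_iff: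
  "xs \<noteq> [] \<Longrightarrow> rotate1 xs = xs \<longleftrightarrow> xs = replicate (length xs) (hd xs)"
proof (cases xs)
  case (Cons y ys)
  show ?thesis
  proof
    assume "rotate1 xs = xs"
    then have "ys @ [y] = y # ys" using Cons by simp
    then have "ys = replicate (length ys) y" by (rule rotate1_fixed_replicate)
    then show "xs = replicate (length xs) (hd xs)" using Cons by simp
  next
    assume "xs = replicate (length xs) (hd xs)"
    then have "ys = replicate (length ys) y" using Cons by simp
    then show "rotate1 xs = xs" using Cons by simp (metis replicate_Suc replicate_append_same)
  qed
qed simp



primrec pw :: "('a, 'b) monoid_scheme \<Rightarrow> ('a \<Rightarrow> int) \<Rightarrow> nat \<Rightarrow> 'a \<Rightarrow> int" where
  "pw G a 0 = und {\<one>\<^bsub>G\<^esub>}"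
| "pw G a (Suc k) = gmult G a (pw G a k)"

definition prl :: "('a, 'b) monoid_scheme \<Rightarrow> 'a list \<Rightarrow> 'a" where
  "prl G xs = foldr (\<lambda>x y. x \<otimes>\<^bsub>G\<^esub> y) xs \<one>\<^bsub>G\<^esub>"

definition wt :: "('a \<Rightarrow> int) \<Rightarrow> 'a list \<Rightarrow> int" where
  "wt a xs = prod_list (map a xs)"

definition tupg :: "('a, 'b) monoid_scheme \<Rightarrow> nat \<Rightarrow> 'a \<Rightarrow> 'a list set" where
  "tupg G k g = {xs. set xs \<subseteq> carrier G \<and> length xs = k \<and> prl G xs = g}"

lemma prl_Nil [simp]: "prl G [] = \<one>\<^bsub>G\<^esub>" by (simp add: prl_def)
lemma prl_Cons [simp]: "prl G (x # xs) = x \<otimes>\<^bsub>G\<^esub> prl G xs" by (simp add: prl_def)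

lemma wt_Nil [simp]: "wt a [] = 1" by (simp add: wt_def)
lemma wt_Cons [simp]: "wt a (x # xs) = a x * wt a xs" by (simp add: wt_def)
lemma wt_rotate1 [simp]: "wt a (rotate1 xs) = wt a xs"
  by (cases xs) (simp_all add: wt_def)
lemma wt_replicate [simp]: "wt a (replicate k x) = a x ^ k"
  by (simp add: wt_def)

lemma (in group) prl_closed [simp]: "set xs \<subseteq> carrier G \<Longrightarrow> prl G xs \<in> carrier G"
  by (induction xs) auto

lemma (in group) prl_append: "set xs \<subseteq> carrier G \<Longrightarrow> set ys \<subseteq> carrier G \<Longrightarrow>
    prl G (xs @ ys) = prl G xs \<otimes> prl G ys"
  by (induction xs) (auto simp: m_assoc)

lemma (in group) prl_replicate: "x \<in> carrier G \<Longrightarrow> prl G (replicate k x) = x [^] k"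
proof (induction k)
  case (Suc k)
  then show ?case by (simp, metis nat_pow_Suc nat_pow_Suc2)
qed simp

lemma (in group) prl_rotate1:
  assumes "set (x # xs) \<subseteq> carrier G"
  shows "prl G (rotate1 (x # xs)) = inv x \<otimes> prl G (x # xs) \<otimes> x"
  using assms by (simp add: prl_append m_assoc)

context fgroup begin

lemma finite_tup: "finite {xs. set xs \<subseteq> carrier G \<and> length xs = k}"
  using finite_lists_length_eq[OF fin] .

lemma finite_tupg: "finite (tupg G k g)"
  unfolding tupg_def by (rule finite_subset[OF _ finite_tup[of k]]) auto

lemma pw_outside: "g \<notin> carrier G \<Longrightarrow> pw G a k g = 0"
  by (cases k) (auto simp: und_def gmult_def)

lemma pw_ZG: "pw G a k \<in> ZG G"
  unfolding ZG_def using pw_outside by auto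

lemma pw_expand: "g \<in> carrier G \<Longrightarrow> pw G a k g = (\<Sum>xs\<in>tupg G k g. wt a xs)"
proof (induction k arbitrary: g)
  case 0
  have "tupg G 0 g = (if g = \<one> then {[]} else {})" unfolding tupg_def by auto
  then show ?case by (simp add: und_def)
next
  case (Suc k)
  have "pw G a (Suc k) g = (\<Sum>x\<in>carrier G. a x * pw G a k (inv x \<otimes> g))"
    using Suc.prems by (simp add: gmult_def)
  also have "\<dots> = (\<Sum>x\<in>carrier G. \<Sum>xs\<in>tupg G k (inv x \<otimes> g). a x * wt a xs)"
    using Suc.prems Suc.IH by (simp add: sum_distrib_left)
  also have "\<dots> = (\<Sum>(x, xs)\<in>Sigma (carrier G) (\<lambda>x. tupg G k (inv x \<otimes> g)). a x * wt a xs)"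
    by (rule sum.Sigma) (auto simp: fin finite_tupg)
  also have "\<dots> = (\<Sum>p\<in>Sigma (carrier G) (\<lambda>x. tupg G k (inv x \<otimes> g)). a (fst p) * wt a (snd p))"
    by (simp add: case_prod_beta)
  also have "\<dots> = (\<Sum>ys\<in>tupg G (Suc k) g. wt a ys)"
  proof (rule sum.reindex_bij_witness[where j="\<lambda>p. fst p # snd p" and i="\<lambda>ys. (hd ys, tl ys)"])
    fix p assume p: "p \<in> Sigma (carrier G) (\<lambda>x. tupg G k (inv x \<otimes> g))"
    then show "(hd (fst p # snd p), tl (fst p # snd p)) = p" by simp
    show "fst p # snd p \<in> tupg G (Suc k) g"
      using p Suc.prems by (auto simp: tupg_def)
    show "wt a (fst p # snd p) = a (fst p) * wt a (snd p)" by simp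
  next
    fix ys assume ys: "ys \<in> tupg G (Suc k) g"
    then obtain x xs where ys': "ys = x # xs" unfolding tupg_def by (cases ys) auto
    then show "fst (hd ys, tl ys) # snd (hd ys, tl ys) = ys" by simp
    have x: "x \<in> carrier G" "set xs \<subseteq> carrier G" "length xs = k" "x \<otimes> prl G xs = g"
      using ys ys' unfolding tupg_def by auto
    then have "prl G xs = inv x \<otimes> g" using Suc.prems
      by (metis inv_cancel1 prl_closed)
    then show "(hd ys, tl ys) \<in> Sigma (carrier G) (\<lambda>x. tupg G k (inv x \<otimes> g))"
      using x ys' unfolding tupg_def by auto
  qed
  finally show ?case .
qed

lemma pw_classfun: "classfun G a \<Longrightarrow> classfun G (pw G a k)"
  by (induction k) (simp_all add: und_one_classfun gmult_classfun)

lemma pow_mod_order: "x \<in> carrier G \<Longrightarrow> x [^] (k::nat) = x [^] (k mod order G)"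
proof -
  assume x: "x \<in> carrier G"
  have "x [^] k = x [^] (order G * (k div order G) + k mod order G)" by simp
  also have "\<dots> = (x [^] order G) [^] (k div order G) \<otimes> x [^] (k mod order G)"
    using x by (simp add: nat_pow_mult nat_pow_pow)
  also have "\<dots> = x [^] (k mod order G)" using x by (simp add: pow_order_eq_1)
  finally show ?thesis .
qed

lemma pow_cong_nat: "x \<in> carrier G \<Longrightarrow> [k = l] (mod order G) \<Longrightarrow> x [^] (k::nat) = x [^] (l::nat)"
  by (metis cong_def pow_mod_order)

lemma conj_pow: "h \<in> carrier G \<Longrightarrow> x \<in> carrier G \<Longrightarrow>
    (h \<otimes> x \<otimes> inv h) [^] (k::nat) = h \<otimes> x [^] k \<otimes> inv h"
  by (induction k) (simp_all add: m_assoc)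

lemma pow_inv_exists:
  assumes "coprime q (order G)"
  obtains q' where "\<And>x. x \<in> carrier G \<Longrightarrow> (x [^] (q::nat)) [^] (q'::nat) = x"
proof -
  obtain q' where q': "[q * q' = Suc 0] (mod order G)" using cong_solve_coprime_nat assms by blast
  have "(x [^] q) [^] q' = x" if "x \<in> carrier G" for x
    using that pow_cong_nat[OF that q'] by (simp add: nat_pow_pow)
  then show ?thesis using that by blast
qed

lemma pow_inj:
  assumes "coprime q (order G)" "x \<in> carrier G" "y \<in> carrier G" "x [^] (q::nat) = y [^] q"
  shows "x = y"
proof -
  obtain q' where q': "\<And>x. x \<in> carrier G \<Longrightarrow> (x [^] (q::nat)) [^] (q'::nat) = x"
    using pow_inv_exists[OF assms(1)] by blast
  have "x = (x [^] q) [^] q'" using q' assms(2) by simp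
  also have "\<dots> = (y [^] q) [^] q'" using assms(4) by simp
  also have "\<dots> = y" using q' assms(3) by simp
  finally show ?thesis .
qed

lemma pow_surj:
  assumes "coprime q (order G)" "g \<in> carrier G"
  shows "\<exists>y\<in>carrier G. y [^] (q::nat) = g"
proof -
  obtain q' where q': "\<And>x. x \<in> carrier G \<Longrightarrow> (x [^] (q::nat)) [^] (q'::nat) = x"
    using pow_inv_exists[OF assms(1)] by blast
  have "(g [^] q') [^] q = g [^] (q' * q)" using assms(2) by (simp add: nat_pow_pow)
  also have "\<dots> = (g [^] q) [^] q'" using assms(2) by (simp add: nat_pow_pow mult.commute)
  also have "\<dots> = g" using q' assms(2) by simp
  finally have "(g [^] q') [^] q = g" .
  then show ?thesis using assms(2) by (intro bexI[of _ "g [^] q'"]) auto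
qed

end


context fgroup begin

lemma conj_class_card_dvd:
  assumes g: "g \<in> carrier G"
  shows "card ((\<lambda>h. h \<otimes> g \<otimes> inv h) ` carrier G) dvd order G"
proof -
  let ?phi = "\<lambda>h. (\<lambda>x \<in> carrier G. h \<otimes> x \<otimes> inv h)"
  have act: "group_action G (carrier G) ?phi" by (rule action_by_conjugation)
  have "orbit G ?phi g = {?phi h g | h. h \<in> carrier G}" by (simp only: orbit_def)
  also have "\<dots> = (\<lambda>h. h \<otimes> g \<otimes> inv h) ` carrier G" using g by force
  finally have o: "orbit G ?phi g = (\<lambda>h. h \<otimes> g \<otimes> inv h) ` carrier G" .
  have "card (orbit G ?phi g) * card (stabilizer G ?phi g) = order G"
    by (rule group_action.orbit_stabilizer_theorem[OF act g])
  then have "order G = card ((\<lambda>h. h \<otimes> g \<otimes> inv h) ` carrier G) * card (stabilizer G ?phi g)"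
    unfolding o by simp
  then show ?thesis by (simp only: dvd_triv_left)
qed

lemma frob:
  assumes q: "prime q" "\<not> q dvd order G" and a: "classfun G a" and y: "y \<in> carrier G"
  shows "[pw G a q (y [^] q) = a y] (mod int q)"
proof -
  define g where "g = y [^] q"
  have g: "g \<in> carrier G" unfolding g_def using y by simp
  have cop: "coprime q (order G)" using q by (simp add: prime_imp_coprime)
  have qpos: "q > 0" using q prime_gt_0_nat by blast
  define C where "C = (\<lambda>h. h \<otimes> g \<otimes> inv h) ` carrier G"
  define R where "R = (\<lambda>h. h \<otimes> y \<otimes> inv h) ` carrier G"
  have finC: "finite C" unfolding C_def using fin by simp
  have gC: "g \<in> C" unfolding C_def using g by (auto intro!: image_eqI[of _ _ \<one>])
  have CG: "C \<subseteq> carrier G" unfolding C_def using g by auto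
  have Cconj: "h \<otimes> c \<otimes> inv h \<in> C" if "h \<in> carrier G" "c \<in> C" for h c
  proof -
    obtain k where k: "k \<in> carrier G" "c = k \<otimes> g \<otimes> inv k" using \<open>c \<in> C\<close> unfolding C_def by auto
    have "h \<otimes> c \<otimes> inv h = (h \<otimes> k) \<otimes> g \<otimes> inv (h \<otimes> k)"
      using k that g by (simp add: inv_mult_group m_assoc)
    then show ?thesis unfolding C_def using k that by auto
  qed
  have pwc: "classfun G (pw G a q)" using pw_classfun[OF a] .
  have s1: "(\<Sum>c\<in>C. pw G a q c) = int (card C) * pw G a q g"
  proof -
    have "(\<Sum>c\<in>C. pw G a q c) = (\<Sum>c\<in>C. pw G a q g)"
    proof (rule sum.cong[OF refl])
      fix c assume "c \<in> C"
      then obtain k where "k \<in> carrier G" "c = k \<otimes> g \<otimes> inv k" unfolding C_def by auto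
      then show "pw G a q c = pw G a q g" using pwc g unfolding classfun_def by simp
    qed
    then show ?thesis by simp
  qed
  define T where "T = {xs. set xs \<subseteq> carrier G \<and> length xs = q \<and> prl G xs \<in> C}"
  have finT: "finite T" unfolding T_def by (rule finite_subset[OF _ finite_tup[of q]]) auto
  have s2: "(\<Sum>c\<in>C. pw G a q c) = (\<Sum>xs\<in>T. wt a xs)"
  proof -
    have "(\<Sum>c\<in>C. pw G a q c) = (\<Sum>c\<in>C. \<Sum>xs\<in>{xs. xs \<in> T \<and> prl G xs = c}. wt a xs)"
    proof (rule sum.cong[OF refl])
      fix c assume c: "c \<in> C"
      have "tupg G q c = {xs. xs \<in> T \<and> prl G xs = c}" unfolding tupg_def T_def using c by auto
      then show "pw G a q c = (\<Sum>xs\<in>{xs. xs \<in> T \<and> prl G xs = c}. wt a xs)"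
        using pw_expand c CG by auto
    qed
    also have "\<dots> = (\<Sum>xs\<in>T. wt a xs)"
      by (rule sum.group[OF finT finC]) (auto simp: T_def)
    finally show ?thesis .
  qed
  have Trot: "\<forall>xs\<in>T. length xs = q \<and> rotate1 xs \<in> T"
  proof
    fix xs assume xs: "xs \<in> T"
    then have l: "length xs = q" and sx: "set xs \<subseteq> carrier G" and px: "prl G xs \<in> C"
      unfolding T_def by auto
    obtain x ys where xys: "xs = x # ys" using l qpos by (cases xs) auto
    have "prl G (rotate1 xs) = inv x \<otimes> prl G xs \<otimes> inv (inv x)"
      using prl_rotate1[of x ys] sx xys by simp
    moreover have "x \<in> carrier G" using sx xys by auto
    moreover have "inv x \<otimes> prl G xs \<otimes> inv (inv x) \<in> C"
      by (rule Cconj) (use px \<open>x \<in> carrier G\<close> in auto)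
    ultimately have "prl G (rotate1 xs) \<in> C" by simp
    then show "length xs = q \<and> rotate1 xs \<in> T" using l sx unfolding T_def by simp
  qed
  have s3: "[(\<Sum>xs\<in>T. wt a xs) = (\<Sum>xs\<in>{xs\<in>T. rotate1 xs = xs}. wt a xs)] (mod int q)"
    by (rule rot_sum_cong[OF q(1) _ finT Trot]) simp
  define R' where "R' = {x\<in>carrier G. x [^] q \<in> C}"
  have fixeq: "{xs\<in>T. rotate1 xs = xs} = (\<lambda>x. replicate q x) ` R'"
  proof (intro equalityI subsetI)
    fix xs assume xs: "xs \<in> {xs\<in>T. rotate1 xs = xs}"
    then have l: "length xs = q" and sx: "set xs \<subseteq> carrier G" and px: "prl G xs \<in> C"
      and r: "rotate1 xs = xs" unfolding T_def by auto
    have ne: "xs \<noteq> []" using l qpos by auto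
    then have e: "xs = replicate q (hd xs)" using rotate1_fixed_iff[OF ne] r l by simp
    have h: "hd xs \<in> carrier G" using ne sx by (simp add: subset_iff)
    have "prl G xs = hd xs [^] q" using prl_replicate[OF h, of q] e by simp
    then have "hd xs \<in> R'" unfolding R'_def using h px by simp
    then show "xs \<in> (\<lambda>x. replicate q x) ` R'" using e by blast
  next
    fix xs assume "xs \<in> (\<lambda>x. replicate q x) ` R'"
    then obtain x where x: "x \<in> R'" "xs = replicate q x" by blast
    then have xc: "x \<in> carrier G" and xq: "x [^] q \<in> C" unfolding R'_def by auto
    have "rotate1 (replicate q x) = replicate q x"
      using rotate1_fixed_iff[of "replicate q x"] qpos by simp
    moreover have "replicate q x \<in> T" unfolding T_def using xc xq qpos prl_replicate[OF xc] by simp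
    ultimately show "xs \<in> {xs\<in>T. rotate1 xs = xs}" using x by simp
  qed
  have injrep: "inj_on (\<lambda>x. replicate q x) R'"
    using qpos by (intro inj_onI) (metis hd_replicate not_gr0)
  have s4: "(\<Sum>xs\<in>{xs\<in>T. rotate1 xs = xs}. wt a xs) = (\<Sum>x\<in>R'. a x ^ q)"
    unfolding fixeq by (simp add: sum.reindex[OF injrep])
  have RR: "R' = R"
  proof (intro equalityI subsetI)
    fix x assume "x \<in> R'"
    then have x: "x \<in> carrier G" "x [^] q \<in> C" unfolding R'_def by auto
    then obtain h where h: "h \<in> carrier G" "x [^] q = h \<otimes> g \<otimes> inv h" unfolding C_def by auto
    have "x [^] q = (h \<otimes> y \<otimes> inv h) [^] q" using h y by (simp add: conj_pow g_def)
    then have "x = h \<otimes> y \<otimes> inv h" using pow_inj[OF cop] x h y by simp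
    then show "x \<in> R" unfolding R_def using h by auto
  next
    fix x assume "x \<in> R"
    then obtain h where h: "h \<in> carrier G" "x = h \<otimes> y \<otimes> inv h" unfolding R_def by auto
    have "x [^] q = h \<otimes> g \<otimes> inv h" using h y by (simp add: conj_pow g_def)
    then show "x \<in> R'" unfolding R'_def C_def using h y by auto
  qed
  have finR: "finite R" unfolding R_def using fin by simp
  have s5: "[(\<Sum>x\<in>R. a x ^ q) = (\<Sum>x\<in>R. a x)] (mod int q)"
    by (rule cong_sum) (rule fermat_int[OF q(1)])
  have s6: "(\<Sum>x\<in>R. a x) = int (card R) * a y"
  proof -
    have "(\<Sum>x\<in>R. a x) = (\<Sum>x\<in>R. a y)"
    proof (rule sum.cong[OF refl])
      fix x assume "x \<in> R"
      then obtain h where "h \<in> carrier G" "x = h \<otimes> y \<otimes> inv h" unfolding R_def by auto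
      then show "a x = a y" using a y unfolding classfun_def by simp
    qed
    then show ?thesis by simp
  qed
  have cRC: "card R = card C"
  proof -
    have RG: "R \<subseteq> carrier G" unfolding R_def using y by auto
    have "(\<lambda>x. x [^] q) ` R = C"
    proof (intro equalityI subsetI)
      fix z assume "z \<in> (\<lambda>x. x [^] q) ` R"
      then show "z \<in> C" using RR unfolding R'_def by auto
    next
      fix z assume z: "z \<in> C"
      then obtain h where h: "h \<in> carrier G" "z = h \<otimes> g \<otimes> inv h" unfolding C_def by auto
      then have "z = (h \<otimes> y \<otimes> inv h) [^] q" using y by (simp add: conj_pow g_def)
      moreover have "h \<otimes> y \<otimes> inv h \<in> R" unfolding R_def using h by auto
      ultimately show "z \<in> (\<lambda>x. x [^] q) ` R" by blast
    qed
    moreover have "inj_on (\<lambda>x. x [^] q) R"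
      using pow_inj[OF cop] RG by (intro inj_onI) auto
    ultimately show ?thesis by (metis card_image)
  qed
  have "[int (card C) * pw G a q g = int (card C) * a y] (mod int q)"
  proof -
    have "int (card C) * pw G a q g = (\<Sum>xs\<in>T. wt a xs)" using s1 s2 by simp
    moreover have "[(\<Sum>xs\<in>T. wt a xs) = (\<Sum>x\<in>R. a x ^ q)] (mod int q)"
      using s3 s4 RR by simp
    moreover have "(\<Sum>x\<in>R. a x) = int (card C) * a y" using s6 cRC by simp
    moreover note s5
    ultimately show ?thesis by (metis (no_types, lifting) cong_trans)
  qed
  moreover have "coprime (int (card C)) (int q)"
  proof -
    have "card C dvd order G" unfolding C_def by (rule conj_class_card_dvd[OF g])
    then have "\<not> q dvd card C" using q(2) dvd_trans by blast
    then have "coprime q (card C)" using q(1) by (simp add: prime_imp_coprime)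
    then show ?thesis by (simp add: coprime_commute)
  qed
  ultimately show ?thesis unfolding g_def by (simp add: cong_mult_lcancel)
qed

end


lemma partition_finite:
  assumes "is_partition G Q" "finite (carrier G)"
  shows "finite Q"
proof -
  have "Q \<subseteq> Pow (carrier G)" using assms(1) unfolding is_partition_def by auto
  then show ?thesis using assms(2) by (meson finite_Pow_iff finite_subset)
qed

lemma partition_block:
  assumes "is_partition G Q" "x \<in> carrier G"
  obtains Y where "Y \<in> Q" "x \<in> Y"
  using assms unfolding is_partition_def by blast

lemma partition_eq:
  assumes "is_partition G Q" "X \<in> Q" "Y \<in> Q" "x \<in> X" "x \<in> Y"
  shows "X = Y"
  using assms unfolding is_partition_def by blast

lemma partition_sum_block:
  assumes P: "is_partition G Q" "finite (carrier G)" and Y0: "Y0 \<in> Q" "g \<in> Y0"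
  shows "(\<Sum>Y\<in>Q. c Y * und Y g) = c Y0"
proof -
  have "(\<Sum>Y\<in>Q. c Y * und Y g) = (\<Sum>Y\<in>Q. if Y = Y0 then c Y else 0)"
  proof (rule sum.cong[OF refl])
    fix Y assume Y: "Y \<in> Q"
    show "c Y * und Y g = (if Y = Y0 then c Y else 0)"
    proof (cases "Y = Y0")
      case True then show ?thesis using Y0 by (simp add: und_def)
    next
      case False
      then have "g \<notin> Y" using partition_eq[OF P(1) Y Y0(1) _ Y0(2)] by blast
      then show ?thesis using False by (simp add: und_def)
    qed
  qed
  also have "\<dots> = c Y0" using partition_finite[OF P] Y0 by (simp add: sum.delta)
  finally show ?thesis .
qed

lemma partition_sum_out:
  assumes P: "is_partition G Q" and g: "g \<notin> carrier G"
  shows "(\<Sum>Y\<in>Q. c Y * und Y g) = 0"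
proof -
  have "\<And>Y. Y \<in> Q \<Longrightarrow> g \<notin> Y" using P g unfolding is_partition_def by blast
  then show ?thesis by (simp add: und_def)
qed

lemma zspan_char:
  assumes P: "is_partition G Q" "finite (carrier G)"
  shows "f \<in> zspan Q \<longleftrightarrow> f \<in> ZG G \<and> (\<forall>Y\<in>Q. \<forall>y1\<in>Y. \<forall>y2\<in>Y. f y1 = f y2)"
proof
  assume "f \<in> zspan Q"
  then obtain c where c: "f = (\<lambda>g. \<Sum>Y\<in>Q. c Y * und Y g)" unfolding zspan_def by blast
  have "f \<in> ZG G" unfolding ZG_def c using partition_sum_out[OF P(1)] by auto
  moreover have "\<forall>Y\<in>Q. \<forall>y1\<in>Y. \<forall>y2\<in>Y. f y1 = f y2"
    unfolding c using partition_sum_block[OF P] by simp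
  ultimately show "f \<in> ZG G \<and> (\<forall>Y\<in>Q. \<forall>y1\<in>Y. \<forall>y2\<in>Y. f y1 = f y2)" by blast
next
  assume f: "f \<in> ZG G \<and> (\<forall>Y\<in>Q. \<forall>y1\<in>Y. \<forall>y2\<in>Y. f y1 = f y2)"
  define c where "c Y = f (SOME y. y \<in> Y)" for Y
  have "f = (\<lambda>g. \<Sum>Y\<in>Q. c Y * und Y g)"
  proof
    fix g show "f g = (\<Sum>Y\<in>Q. c Y * und Y g)"
    proof (cases "g \<in> carrier G")
      case True
      then obtain Y where Y: "Y \<in> Q" "g \<in> Y" using partition_block[OF P(1)] by blast
      have "(SOME y. y \<in> Y) \<in> Y" using Y by (meson someI)
      then have "c Y = f g" unfolding c_def using f Y by blast
      then show ?thesis using partition_sum_block[OF P Y] by simp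
    next
      case False
      then show ?thesis using f partition_sum_out[OF P(1) False] unfolding ZG_def by simp
    qed
  qed
  then show "f \<in> zspan Q" unfolding zspan_def by blast
qed

context fgroup begin

lemma order_pos: "order G > 0"
  unfolding order_def using fin one_closed by (auto simp: card_gt_0_iff)

lemma int_pow_mod_order:
  assumes x: "x \<in> carrier G"
  shows "x [^] (m::int) = x [^] (nat (m mod int (order G)))"
proof -
  let ?n = "int (order G)"
  have "x [^] (m mod ?n + ?n * (m div ?n)) = x [^] (m mod ?n) \<otimes> x [^] (?n * (m div ?n))"
    by (rule int_pow_mult[OF x])
  also have "x [^] (?n * (m div ?n)) = (x [^] ?n) [^] (m div ?n)"
    by (rule int_pow_pow[OF x, symmetric])
  also have "x [^] ?n = \<one>" using x by (simp add: int_pow_int pow_order_eq_1)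
  finally have "x [^] m = x [^] (m mod ?n)" using x by (simp add: mod_mult_div_eq)
  also have "\<dots> = x [^] (int (nat (m mod ?n)))" using order_pos by simp
  also have "\<dots> = x [^] (nat (m mod ?n))" by (rule int_pow_int)
  finally show ?thesis .
qed

lemma pow_cong_int:
  assumes "x \<in> carrier G" "[a = b] (mod int (order G))"
  shows "x [^] (a::int) = x [^] (b::int)"
proof -
  have "a mod int (order G) = b mod int (order G)" using assms(2) unfolding cong_def .
  then show ?thesis using int_pow_mod_order[OF assms(1), of a] int_pow_mod_order[OF assms(1), of b]
    by simp
qed

lemma coprime_nat_mod:
  assumes "coprime m (int (order G))"
  shows "coprime (nat (m mod int (order G))) (order G)"
proof -
  have t: "int (nat (m mod int (order G))) = m mod int (order G)" using order_pos by simp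
  have "coprime (int (nat (m mod int (order G)))) (int (order G))"
    unfolding t using assms order_pos by simp
  then show ?thesis by (simp only: coprime_int_iff)
qed

lemma int_pow_inv_exists:
  assumes "coprime m (int (order G))"
  obtains m' where "\<And>x. x \<in> carrier G \<Longrightarrow> (x [^] (m::int)) [^] (m'::int) = x"
    "coprime m' (int (order G))"
proof -
  obtain m' where m': "[m * m' = 1] (mod int (order G))" using cong_solve_coprime_int assms by blast
  have "(x [^] m) [^] m' = x" if "x \<in> carrier G" for x
    using pow_cong_int[OF that m'] that by (simp add: int_pow_pow)
  moreover have "coprime m' (int (order G))"
  proof -
    have "coprime (1::int) (int (order G))" by simp
    then have "coprime (m * m') (int (order G))" using cong_imp_coprime[OF cong_sym[OF m']] by blast
    then show ?thesis by simp
  qed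
  ultimately show ?thesis using that by blast
qed

lemma int_pow_inj:
  assumes "coprime m (int (order G))" "x \<in> carrier G" "y \<in> carrier G" "x [^] (m::int) = y [^] m"
  shows "x = y"
proof -
  obtain m' where q': "\<And>x. x \<in> carrier G \<Longrightarrow> (x [^] (m::int)) [^] (m'::int) = x"
    using int_pow_inv_exists[OF assms(1)] by blast
  have "x = (x [^] m) [^] m'" using q' assms(2) by simp
  also have "\<dots> = (y [^] m) [^] m'" using assms(4) by simp
  also have "\<dots> = y" using q' assms(3) by simp
  finally show ?thesis .
qed

lemma int_pow_surj:
  assumes "coprime m (int (order G))" "g \<in> carrier G"
  shows "\<exists>y\<in>carrier G. y [^] (m::int) = g"
proof -
  obtain m' where q': "\<And>x. x \<in> carrier G \<Longrightarrow> (x [^] (m::int)) [^] (m'::int) = x"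
    using int_pow_inv_exists[OF assms(1)] by blast
  have "(g [^] m') [^] m = g [^] (m' * m)" using assms(2) by (simp add: int_pow_pow)
  also have "\<dots> = (g [^] m) [^] m'" using assms(2) by (simp add: int_pow_pow mult.commute)
  also have "\<dots> = g" using q' assms(2) by simp
  finally have "(g [^] m') [^] m = g" .
  moreover have "g [^] m' \<in> carrier G" using assms(2) by simp
  ultimately show ?thesis by blast
qed

end

lemma exists_big_rep:
  fixes n :: nat and m :: int and M :: nat
  assumes n: "n > 0" and cop: "coprime m (int n)"
  shows "\<exists>k::nat. k > 0 \<and> [int k = m] (mod int n) \<and> (\<forall>p. prime p \<longrightarrow> p dvd k \<longrightarrow> M < p)"
proof -
  define P where "P = {p::nat. prime p \<and> p \<le> M \<and> \<not> p dvd n}"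
  define L where "L = (\<Prod>p\<in>P. p)"
  have finP: "finite P" unfolding P_def by simp
  have Lpos: "L > 0" unfolding L_def using finP by (auto simp: P_def prime_gt_0_nat intro!: prod_pos)
  have "coprime n L" unfolding L_def
    by (rule prod_coprime_right) (auto simp: P_def prime_imp_coprime coprime_commute)
  define m0 where "m0 = nat (m mod int n)"
  have m0: "int m0 = m mod int n" unfolding m0_def using n by simp
  obtain x where x: "[x = m0] (mod n)" "[x = 1] (mod L)"
    using binary_chinese_remainder_nat[OF \<open>coprime n L\<close>] by blast
  define k where "k = x + n * L"
  have kpos: "k > 0" unfolding k_def using n Lpos by simp
  have k1: "[k = m0] (mod n)" unfolding k_def using x(1) by (simp add: cong_def)
  have k2: "[k = 1] (mod L)" unfolding k_def using x(2) by (simp add: cong_def)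
  have kc: "[int k = m] (mod int n)"
  proof -
    have "[int k = int m0] (mod int n)" using k1 by (simp add: cong_int_iff)
    then show ?thesis unfolding m0 by (simp add: cong_def)
  qed
  have "M < p" if p: "prime p" "p dvd k" for p
  proof (rule ccontr)
    assume "\<not> M < p"
    then have pM: "p \<le> M" by simp
    show False
    proof (cases "p dvd n")
      case True
      have "int p dvd int n" using True by simp
      then have "[int k = m] (mod int p)" by (rule cong_dvd_modulus[OF kc])
      moreover have "int p dvd int k" using p by simp
      ultimately have "int p dvd m" using cong_dvd_iff by blast
      moreover have "int p dvd int n" using True by simp
      ultimately have "is_unit (int p)" using cop coprime_common_divisor by blast
      then show False using p by simp
    next
      case False
      then have "p \<in> P" unfolding P_def using p pM by simp
      then have "p dvd L" unfolding L_def by (rule dvd_prodI[where f="\<lambda>p. p", OF finP])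
      then have "[k = 1] (mod p)" by (rule cong_dvd_modulus_nat[OF k2])
      then have "p dvd 1" using p(2) cong_dvd_iff by blast
      then show False using p by simp
    qed
  qed
  then show ?thesis using kpos kc by blast
qed



definition pset :: "('a, 'b) monoid_scheme \<Rightarrow> 'a set \<Rightarrow> nat \<Rightarrow> 'a set" where
  "pset G X k = (\<lambda>x. x [^]\<^bsub>G\<^esub> k) ` X"

locale cs = fgroup G for G (structure) + fixes A S
  assumes SR: "S_ring G A S" and CE: "central G A"
begin

lemma A_ZG: "A \<subseteq> ZG G" using SR unfolding S_ring_def by blast
lemma one_A: "und {\<one>} \<in> A" using SR unfolding S_ring_def by blast
lemma add_A: "a \<in> A \<Longrightarrow> b \<in> A \<Longrightarrow> (\<lambda>x. a x + b x) \<in> A" using SR unfolding S_ring_def by blast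
lemma neg_A: "a \<in> A \<Longrightarrow> (\<lambda>x. - a x) \<in> A" using SR unfolding S_ring_def by blast
lemma mult_A: "a \<in> A \<Longrightarrow> b \<in> A \<Longrightarrow> gmult G a b \<in> A" using SR unfolding S_ring_def by blast
lemma partS: "is_partition G S" using SR unfolding S_ring_def by blast
lemma oneS: "{\<one>} \<in> S" using SR unfolding S_ring_def by blast
lemma A_eq: "A = zspan S" using SR unfolding S_ring_def by blast

lemma finS: "finite S" using partition_finite[OF partS fin] .
lemma S_sub: "X \<in> S \<Longrightarrow> X \<subseteq> carrier G" using partS unfolding is_partition_def by blast
lemma S_ne: "X \<in> S \<Longrightarrow> X \<noteq> {}" using partS unfolding is_partition_def by blast

lemma A_char: "a \<in> A \<longleftrightarrow> a \<in> ZG G \<and> (\<forall>Y\<in>S. \<forall>y1\<in>Y. \<forall>y2\<in>Y. a y1 = a y2)"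
  using zspan_char[OF partS fin] A_eq by simp

lemma A_const: "a \<in> A \<Longrightarrow> Y \<in> S \<Longrightarrow> y1 \<in> Y \<Longrightarrow> y2 \<in> Y \<Longrightarrow> a y1 = a y2"
  using A_char by blast

lemma A_central: "a \<in> A \<Longrightarrow> \<forall>f\<in>ZG G. gmult G a f = gmult G f a"
  using CE unfolding central_def by blast

lemma A_classfun: "a \<in> A \<Longrightarrow> classfun G a"
  using central_classfun A_central by blast

lemma pw_A: "a \<in> A \<Longrightarrow> pw G a k \<in> A"
  by (induction k) (simp_all add: one_A mult_A)

lemma und_A: assumes X: "X \<in> S" shows "und X \<in> A"
proof -
  have "und X \<in> ZG G" using und_ZG S_sub X by blast
  moreover have "\<forall>Y\<in>S. \<forall>y1\<in>Y. \<forall>y2\<in>Y. und X y1 = und X y2"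
  proof (intro ballI)
    fix Y y1 y2 assume Y: "Y \<in> S" "y1 \<in> Y" "y2 \<in> Y"
    show "und X y1 = und X y2"
    proof (cases "Y = X")
      case True then show ?thesis using Y by (simp add: und_def)
    next
      case False
      then have "y1 \<notin> X" "y2 \<notin> X" using partition_eq[OF partS X Y(1)] Y by blast+
      then show ?thesis by (simp add: und_def)
    qed
  qed
  ultimately show ?thesis using A_char by blast
qed

lemma pset_sub: "X \<subseteq> carrier G \<Longrightarrow> pset G X k \<subseteq> carrier G"
  unfolding pset_def by auto

lemma pset_disj:
  assumes cop: "coprime q (order G)" and X: "X \<in> S" "X' \<in> S"
    and z: "z \<in> pset G X q" "z \<in> pset G X' q"
  shows "X = X'"
proof -
  obtain x x' where x: "x \<in> X" "z = x [^] q" and x': "x' \<in> X'" "z = x' [^] q"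
    using z unfolding pset_def by blast
  have "x = x'" using pow_inj[OF cop, of x x'] x x' S_sub X by blast
  then show ?thesis using partition_eq[OF partS X] x x' by blast
qed

lemma pset_ind:
  assumes q: "prime q" "\<not> q dvd order G" and X: "X \<in> S" and g: "g \<in> carrier G"
  shows "[pw G (und X) q g = (if g \<in> pset G X q then 1 else 0)] (mod int q)"
proof -
  have cop: "coprime q (order G)" using q by (simp add: prime_imp_coprime)
  obtain y where y: "y \<in> carrier G" "y [^] q = g" using pow_surj[OF cop g] by blast
  have "[pw G (und X) q (y [^] q) = und X y] (mod int q)"
    by (rule frob[OF q A_classfun[OF und_A[OF X]] y(1)])
  moreover have "(y \<in> X) = (g \<in> pset G X q)"
  proof
    assume "y \<in> X" then show "g \<in> pset G X q" using y unfolding pset_def by blast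
  next
    assume "g \<in> pset G X q"
    then obtain x where x: "x \<in> X" "g = x [^] q" unfolding pset_def by blast
    moreover have "x [^] q = y [^] q" using x y by simp
    ultimately have "x = y" using pow_inj[OF cop, of x y] y S_sub X by blast
    then show "y \<in> X" using x by simp
  qed
  ultimately show ?thesis using y by (simp add: und_def)
qed

lemma pset_meets:
  assumes q: "prime q" "\<not> q dvd order G" and X: "X \<in> S" and Y: "Y \<in> S"
    and y1: "y1 \<in> Y" "y1 \<in> pset G X q" and y2: "y2 \<in> Y"
  shows "y2 \<in> pset G X q"
proof (rule ccontr)
  assume n: "y2 \<notin> pset G X q"
  have c1: "y1 \<in> carrier G" "y2 \<in> carrier G" using S_sub Y y1 y2 by blast+
  have "pw G (und X) q y1 = pw G (und X) q y2"
    using A_const[OF pw_A[OF und_A[OF X]] Y y1(1) y2] .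
  moreover have "[pw G (und X) q y1 = 1] (mod int q)" using pset_ind[OF q X c1(1)] y1 by simp
  moreover have "[pw G (und X) q y2 = 0] (mod int q)" using pset_ind[OF q X c1(2)] n by simp
  ultimately have "[1 = 0] (mod int q)" by (metis cong_sym cong_trans)
  then have "int q dvd 1" using cong_0_iff cong_sym by blast
  then have "q dvd 1" by (metis int_dvd_int_iff of_nat_1)
  then show False using q(1) by auto
qed

lemma schur_prime:
  assumes q: "prime q" "\<not> q dvd order G" and X: "X \<in> S"
  shows "pset G X q \<in> S"
proof -
  have cop: "coprime q (order G)" using q by (simp add: prime_imp_coprime)
  define f where "f X = (SOME Y. Y \<in> S \<and> Y \<subseteq> pset G X q)" for X
  have fex: "f X \<in> S \<and> f X \<subseteq> pset G X q" if X: "X \<in> S" for X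
  proof -
    obtain x where x: "x \<in> X" using S_ne[OF X] by blast
    have xq: "x [^] q \<in> carrier G" using x S_sub X by blast
    obtain Y where Y: "Y \<in> S" "x [^] q \<in> Y" using partition_block[OF partS xq] by blast
    have "x [^] q \<in> pset G X q" using x unfolding pset_def by blast
    then have "Y \<subseteq> pset G X q" using pset_meets[OF q X Y(1) Y(2)] by blast
    then have "\<exists>Y. Y \<in> S \<and> Y \<subseteq> pset G X q" using Y by blast
    then show ?thesis unfolding f_def by (rule someI_ex)
  qed
  have finj: "inj_on f S"
  proof (rule inj_onI)
    fix X X' assume XX: "X \<in> S" "X' \<in> S" "f X = f X'"
    obtain z where z: "z \<in> f X" using S_ne fex XX(1) by blast
    have "z \<in> pset G X q" "z \<in> pset G X' q" using z fex XX by auto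
    then show "X = X'" using pset_disj[OF cop XX(1,2)] by blast
  qed
  have fS: "f ` S = S" using endo_inj_surj[OF finS _ finj] fex by blast
  have "pset G X q \<subseteq> f X"
  proof
    fix z assume z: "z \<in> pset G X q"
    have zc: "z \<in> carrier G" using z pset_sub S_sub X by blast
    obtain Y where Y: "Y \<in> S" "z \<in> Y" using partition_block[OF partS zc] by blast
    then obtain X' where X': "X' \<in> S" "Y = f X'" using fS by (metis imageE)
    have "z \<in> pset G X' q" using fex[OF X'(1)] X' Y by blast
    then have "X' = X" using pset_disj[OF cop X'(1) X] z by blast
    then show "z \<in> f X" using X' Y by simp
  qed
  then have "pset G X q = f X" using fex[OF X] by blast
  then show ?thesis using fex[OF X] by simp
qed

lemma schur_nat:
  "coprime k (order G) \<Longrightarrow> X \<in> S \<Longrightarrow> pset G X k \<in> S"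
proof (induction k arbitrary: X rule: less_induct)
  case (less k)
  show ?case
  proof (cases "k = 0")
    case True
    then have "order G = 1" using less.prems(1) by simp
    then have cG: "carrier G = {\<one>}" unfolding order_def
      by (metis card_1_singletonE one_closed singletonD)
    then have "X = {\<one>}" using S_sub[OF less.prems(2)] S_ne[OF less.prems(2)]
      by (metis subset_singletonD)
    then show ?thesis using True less.prems(2) by (simp add: pset_def)
  next
    case k0: False
    show ?thesis
    proof (cases "k = 1")
      case True
      have "pset G X k = X" unfolding pset_def True using S_sub[OF less.prems(2)]
        by (force simp: image_iff)
      then show ?thesis using less.prems(2) by simp
    next
      case False
      obtain p where p: "prime p" "p dvd k" using prime_factor_nat[OF False] by blast
      then obtain j where j: "k = p * j" by blast
      have p2: "p \<ge> 2" using p prime_ge_2_nat by blast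
      have jpos: "j > 0" using j k0 by (cases j) auto
      have jk: "j < k" using j p2 jpos by simp
      have cj: "coprime j (order G)" using less.prems(1) j by simp
      have cp: "coprime p (order G)" using less.prems(1) j by simp
      have pn: "\<not> p dvd order G"
      proof
        assume "p dvd order G"
        then have "is_unit p" using cp by (meson coprime_common_divisor dvd_refl)
        then show False using p by simp
      qed
      have "pset G X j \<in> S" using less.IH[OF jk cj less.prems(2)] .
      then have "pset G (pset G X j) p \<in> S" by (rule schur_prime[OF p(1) pn])
      moreover have "pset G (pset G X j) p = pset G X k"
        unfolding pset_def j using S_sub[OF less.prems(2)]
        by (auto simp: nat_pow_pow image_image mult.commute intro!: image_cong)
      ultimately show ?thesis by simp
    qed
  qed
qed

lemma pow_set_pset: "X \<subseteq> carrier G \<Longrightarrow> pow_set G X m = pset G X (nat (m mod int (order G)))"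
  unfolding pow_set_def pset_def using int_pow_mod_order by (auto intro!: image_cong)

lemma schur: "X \<in> S \<Longrightarrow> coprime m (int (order G)) \<Longrightarrow> pow_set G X m \<in> S"
  using pow_set_pset S_sub schur_nat coprime_nat_mod by simp

end


lemma small_cong_eq:
  fixes u v B :: int
  assumes "[u = v] (mod int q)" "\<bar>u\<bar> \<le> B" "\<bar>v\<bar> \<le> B" "2 * B < int q"
  shows "u = v"
proof (rule ccontr)
  assume ne: "u \<noteq> v"
  have "int q dvd (u - v)" using assms(1) by (simp add: cong_iff_dvd_diff)
  then have "\<bar>int q\<bar> \<le> \<bar>u - v\<bar>" using ne by (intro dvd_imp_le_int) auto
  then show False using assms by linarith
qed

context cs begin

lemma tr_mem: "y \<in> tr G X \<longleftrightarrow> (\<exists>m x. coprime m (int (order G)) \<and> x \<in> X \<and> y = x [^] m)"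
  unfolding tr_def pow_set_def order_def by auto

lemma X_sub_tr: "X \<subseteq> carrier G \<Longrightarrow> X \<subseteq> tr G X"
proof
  fix x assume "X \<subseteq> carrier G" "x \<in> X"
  then have "x = x [^] (1::int)" by auto
  then show "x \<in> tr G X" unfolding tr_mem using \<open>x \<in> X\<close> by (metis coprime_1_left)
qed

lemma tr_sub: assumes X: "X \<subseteq> carrier G" shows "tr G X \<subseteq> carrier G"
proof
  fix y assume "y \<in> tr G X"
  then obtain m x where "x \<in> X" "y = x [^] (m::int)" unfolding tr_mem by blast
  then show "y \<in> carrier G" using X by auto
qed

lemma tr_sub_tr:
  assumes X: "X \<in> S" and Y: "Y \<in> S" and z: "z \<in> tr G X" "z \<in> tr G Y"
  shows "tr G Y \<subseteq> tr G X"
proof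
  let ?n = "int (order G)"
  obtain m x where mx: "coprime m ?n" "x \<in> X" "z = x [^] m" using z(1) unfolding tr_mem by blast
  obtain k y where ky: "coprime k ?n" "y \<in> Y" "z = y [^] k" using z(2) unfolding tr_mem by blast
  have XS: "pow_set G X m \<in> S" using schur[OF X mx(1)] .
  have YS: "pow_set G Y k \<in> S" using schur[OF Y ky(1)] .
  have "z \<in> pow_set G X m" unfolding pow_set_def using mx by blast
  moreover have "z \<in> pow_set G Y k" unfolding pow_set_def using ky by blast
  ultimately
  have eq: "pow_set G Y k = pow_set G X m" using partition_eq[OF partS YS XS] by blast
  obtain k' where k': "\<And>w. w \<in> carrier G \<Longrightarrow> (w [^] k) [^] k' = w" "coprime k' ?n"
    using int_pow_inv_exists[OF ky(1)] by blast
  fix w assume "w \<in> tr G Y"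
  then obtain j y' where jy: "coprime j ?n" "y' \<in> Y" "w = y' [^] j" unfolding tr_mem by blast
  have y'c: "y' \<in> carrier G" using jy S_sub Y by blast
  have "y' [^] k \<in> pow_set G X m" using eq jy unfolding pow_set_def by blast
  then obtain x' where x': "x' \<in> X" "y' [^] k = x' [^] m" unfolding pow_set_def by blast
  have x'c: "x' \<in> carrier G" using x' S_sub X by blast
  have "y' = (y' [^] k) [^] k'" using k'(1)[OF y'c] by simp
  also have "\<dots> = x' [^] (m * k')" using x' x'c by (simp add: int_pow_pow)
  finally have "w = x' [^] (m * k' * j)" using jy x'c by (simp add: int_pow_pow)
  moreover have "coprime (m * k' * j) ?n" using mx(1) k'(2) jy(1) by simp
  ultimately show "w \<in> tr G X" unfolding tr_mem using x'(1) by blast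
qed

lemma tr_eq:
  assumes "X \<in> S" "Y \<in> S" "z \<in> tr G X" "z \<in> tr G Y"
  shows "tr G X = tr G Y"
  using tr_sub_tr[OF assms] tr_sub_tr[OF assms(2,1) assms(4,3)] by blast

lemma tr_one: "tr G {\<one>} = {\<one>}"
proof (intro equalityI subsetI)
  fix y assume "y \<in> tr G {\<one>}"
  then obtain m x where "x \<in> {\<one>}" "y = x [^] (m::int)" unfolding tr_mem by blast
  then show "y \<in> {\<one>}" by simp
next
  fix y assume "y \<in> {\<one>}"
  then have "y = \<one> [^] (1::int) \<and> coprime (1::int) (int (order G)) \<and> \<one> \<in> {\<one>}" by simp
  then show "y \<in> tr G {\<one>}" unfolding tr_mem by blast
qed

lemma tr_inv: assumes X: "X \<subseteq> carrier G" shows "inv_set G (tr G X) = tr G X"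
proof (intro equalityI subsetI)
  fix y assume "y \<in> inv_set G (tr G X)"
  then obtain t where t: "t \<in> tr G X" "y = inv t" unfolding inv_set_def by blast
  then obtain m x where mx: "coprime m (int (order G))" "x \<in> X" "y = inv (x [^] m)"
    unfolding tr_mem by blast
  then have "y = x [^] (- m)" using X by (auto simp: int_pow_neg)
  moreover have "coprime (- m) (int (order G))" using mx by simp
  ultimately show "y \<in> tr G X" unfolding tr_mem using mx by blast
next
  fix y assume "y \<in> tr G X"
  then obtain m x where mx: "coprime m (int (order G))" "x \<in> X" "y = x [^] m"
    unfolding tr_mem by blast
  have xc: "x \<in> carrier G" using mx X by blast
  have "y = inv (x [^] (- m))" using mx xc by (simp add: int_pow_neg)
  moreover have "coprime (- m) (int (order G))" using mx by simp
  ultimately have "y = inv (x [^] (- m)) \<and> x [^] (- m) \<in> tr G X" unfolding tr_mem using mx by blast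
  then show "y \<in> inv_set G (tr G X)" unfolding inv_set_def by blast
qed

lemma partP: "is_partition G (tr G ` S)"
  unfolding is_partition_def
proof (intro conjI ballI impI)
  fix Y assume "Y \<in> tr G ` S"
  then obtain X where X: "X \<in> S" "Y = tr G X" by blast
  show "Y \<noteq> {}" using X S_ne X_sub_tr S_sub by blast
  show "Y \<subseteq> carrier G" using X tr_sub S_sub by blast
next
  show "\<Union> (tr G ` S) = carrier G"
  proof (intro equalityI subsetI)
    fix x assume "x \<in> \<Union> (tr G ` S)"
    then show "x \<in> carrier G" using tr_sub S_sub by blast
  next
    fix x assume "x \<in> carrier G"
    then obtain X where "X \<in> S" "x \<in> X" using partition_block[OF partS] by blast
    then show "x \<in> \<Union> (tr G ` S)" using X_sub_tr S_sub by blast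
  qed
next
  fix Y Z assume "Y \<in> tr G ` S" "Z \<in> tr G ` S" "Y \<noteq> Z"
  then show "Y \<inter> Z = {}" using tr_eq by blast
qed

lemma P_char:
  "a \<in> zspan (tr G ` S) \<longleftrightarrow>
     a \<in> A \<and> (\<forall>x\<in>carrier G. \<forall>m. coprime m (int (order G)) \<longrightarrow> a (x [^] m) = a x)"
proof
  assume a: "a \<in> zspan (tr G ` S)"
  then have aZ: "a \<in> ZG G" and ac: "\<forall>Y\<in>tr G ` S. \<forall>y1\<in>Y. \<forall>y2\<in>Y. a y1 = a y2"
    using zspan_char[OF partP fin] by blast+
  have "a \<in> A" unfolding A_char using aZ ac X_sub_tr S_sub by (meson image_eqI subsetD)
  moreover have "a (x [^] m) = a x" if xm: "x \<in> carrier G" "coprime m (int (order G))" for x m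
  proof -
    obtain X where X: "X \<in> S" "x \<in> X" using partition_block[OF partS xm(1)] by blast
    have "x [^] m \<in> tr G X" unfolding tr_mem using X xm by blast
    moreover have "x \<in> tr G X" using X X_sub_tr S_sub by blast
    ultimately show ?thesis using ac X by blast
  qed
  ultimately show "a \<in> A \<and> (\<forall>x\<in>carrier G. \<forall>m. coprime m (int (order G)) \<longrightarrow> a (x [^] m) = a x)"
    by blast
next
  assume a: "a \<in> A \<and> (\<forall>x\<in>carrier G. \<forall>m. coprime m (int (order G)) \<longrightarrow> a (x [^] m) = a x)"
  have "a \<in> ZG G" using a A_ZG by blast
  moreover have "\<forall>Y\<in>tr G ` S. \<forall>y1\<in>Y. \<forall>y2\<in>Y. a y1 = a y2"
  proof (intro ballI)
    fix Y y1 y2 assume Y: "Y \<in> tr G ` S" "y1 \<in> Y" "y2 \<in> Y"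
    then obtain X where X: "X \<in> S" "Y = tr G X" by blast
    have yy: "y1 \<in> tr G X" "y2 \<in> tr G X" using Y X by auto
    obtain m1 x1 where 1: "coprime m1 (int (order G))" "x1 \<in> X" "y1 = x1 [^] m1"
      using yy(1) unfolding tr_mem by blast
    obtain m2 x2 where 2: "coprime m2 (int (order G))" "x2 \<in> X" "y2 = x2 [^] m2"
      using yy(2) unfolding tr_mem by blast
    have c: "x1 \<in> carrier G" "x2 \<in> carrier G" using 1 2 S_sub X by blast+
    have "a y1 = a x1" using a 1 c by simp
    also have "\<dots> = a x2" using A_const a X 1 2 by blast
    also have "\<dots> = a y2" using a 2 c by simp
    finally show "a y1 = a y2" .
  qed
  ultimately show "a \<in> zspan (tr G ` S)" using zspan_char[OF partP fin] by blast
qed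

lemma phi_at:
  assumes a: "a \<in> A" and m: "coprime m (int (order G))" and x: "x \<in> carrier G"
  shows "phi G S m a (x [^] m) = a x"
proof -
  obtain X0 where X0: "X0 \<in> S" "x \<in> X0" using partition_block[OF partS x] by blast
  have "phi G S m a (x [^] m) = (\<Sum>X\<in>S. if X = X0 then a (SOME y. y \<in> X) else 0)"
    unfolding phi_def
  proof (rule sum.cong[OF refl])
    fix X assume X: "X \<in> S"
    have "(x [^] m \<in> pow_set G X m) = (X = X0)"
    proof
      assume "x [^] m \<in> pow_set G X m"
      then obtain x' where x': "x' \<in> X" "x [^] m = x' [^] m" unfolding pow_set_def by blast
      then have "x' = x" using int_pow_inj[OF m, of x' x] x S_sub X by auto
      then show "X = X0" using partition_eq[OF partS X X0(1)] x' X0 by blast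
    next
      assume "X = X0" then show "x [^] m \<in> pow_set G X m" using X0 unfolding pow_set_def by blast
    qed
    then show "a (SOME x. x \<in> X) * und (pow_set G X m) (x [^] m) = (if X = X0 then a (SOME y. y \<in> X) else 0)"
      by (simp add: und_def)
  qed
  also have "\<dots> = a (SOME y. y \<in> X0)" using finS X0 by (simp add: sum.delta)
  also have "\<dots> = a x"
  proof -
    have "(SOME y. y \<in> X0) \<in> X0" using X0 by (meson someI)
    then show ?thesis using A_const[OF a X0(1) _ X0(2)] by blast
  qed
  finally show ?thesis .
qed

lemma phi_out:
  assumes "g \<notin> carrier G" shows "phi G S m a g = 0"
proof -
  have "\<And>X. X \<in> S \<Longrightarrow> g \<notin> pow_set G X m"
    using assms S_sub unfolding pow_set_def by fastforce
  then show ?thesis unfolding phi_def by (simp add: und_def)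
qed

lemma phi_fix_iff:
  assumes a: "a \<in> A" and m: "coprime m (int (order G))"
  shows "phi G S m a = a \<longleftrightarrow> (\<forall>x\<in>carrier G. a (x [^] m) = a x)"
proof
  assume "phi G S m a = a"
  then show "\<forall>x\<in>carrier G. a (x [^] m) = a x" using phi_at[OF a m] by metis
next
  assume inv: "\<forall>x\<in>carrier G. a (x [^] m) = a x"
  show "phi G S m a = a"
  proof
    fix g show "phi G S m a g = a g"
    proof (cases "g \<in> carrier G")
      case True
      then obtain y where y: "y \<in> carrier G" "y [^] m = g" using int_pow_surj[OF m] by blast
      then show ?thesis using phi_at[OF a m y(1)] inv by metis
    next
      case False
      then show ?thesis using phi_out a A_ZG unfolding ZG_def by auto
    qed
  qed
qed

end


context fgroup begin

lemma gmult_one_left: "f \<in> ZG G \<Longrightarrow> gmult G (und {\<one>}) f = f"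
proof
  fix z assume f: "f \<in> ZG G"
  show "gmult G (und {\<one>}) f z = f z"
  proof (cases "z \<in> carrier G")
    case True then show ?thesis using gmult_und_left[of \<one> z f] by simp
  next
    case False then show ?thesis using f unfolding ZG_def gmult_def by simp
  qed
qed

lemma gmult_ZG: "gmult G f h \<in> ZG G"
  unfolding ZG_def gmult_def by simp

lemma pw_gmult:
  assumes bc: "\<forall>f\<in>ZG G. gmult G b f = gmult G f b"
  shows "pw G (gmult G a b) k = gmult G (pw G a k) (pw G b k)"
proof (induction k)
  case 0
  show ?case using gmult_one_left[OF und_ZG[of "{\<one>}"]] by simp
next
  case (Suc k)
  let ?pa = "pw G a k" and ?pb = "pw G b k"
  have "pw G (gmult G a b) (Suc k) = gmult G (gmult G a b) (gmult G ?pa ?pb)"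
    using Suc by simp
  also have "\<dots> = gmult G a (gmult G b (gmult G ?pa ?pb))" by (rule gmult_assoc)
  also have "gmult G b (gmult G ?pa ?pb) = gmult G (gmult G b ?pa) ?pb" by (rule gmult_assoc[symmetric])
  also have "gmult G b ?pa = gmult G ?pa b" using bc pw_ZG by blast
  also have "gmult G (gmult G ?pa b) ?pb = gmult G ?pa (gmult G b ?pb)" by (rule gmult_assoc)
  also have "gmult G a (gmult G ?pa (gmult G b ?pb)) = gmult G (gmult G a ?pa) (gmult G b ?pb)"
    by (rule gmult_assoc[symmetric])
  finally show ?case by simp
qed

lemma gmult_cong_mod:
  assumes f: "\<forall>z\<in>carrier G. [f z = f' z] (mod M)" and h: "\<forall>z\<in>carrier G. [h z = h' z] (mod M)"
  shows "[gmult G f h z = gmult G f' h' z] (mod M)"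
proof (cases "z \<in> carrier G")
  case True
  have "[(\<Sum>x\<in>carrier G. f x * h (inv x \<otimes> z)) = (\<Sum>x\<in>carrier G. f' x * h' (inv x \<otimes> z))] (mod M)"
  proof (rule cong_sum)
    fix x assume x: "x \<in> carrier G"
    then have "inv x \<otimes> z \<in> carrier G" using True by simp
    then show "[f x * h (inv x \<otimes> z) = f' x * h' (inv x \<otimes> z)] (mod M)"
      using f h x by (blast intro: cong_mult)
  qed
  then show ?thesis using True by (simp add: gmult_def)
next
  case False then show ?thesis by (simp add: gmult_def)
qed

end

context cs begin

lemma mult_P:
  assumes a: "a \<in> zspan (tr G ` S)" and b: "b \<in> zspan (tr G ` S)"
  shows "gmult G a b \<in> zspan (tr G ` S)"
proof -
  let ?n = "int (order G)"
  have aA: "a \<in> A" and ainv: "\<forall>x\<in>carrier G. \<forall>m. coprime m ?n \<longrightarrow> a (x [^] m) = a x"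
    using P_char a by blast+
  have bA: "b \<in> A" and binv: "\<forall>x\<in>carrier G. \<forall>m. coprime m ?n \<longrightarrow> b (x [^] m) = b x"
    using P_char b by blast+
  define c where "c = gmult G a b"
  have cA: "c \<in> A" unfolding c_def using mult_A[OF aA bA] .
  have cc: "classfun G c" using A_classfun[OF cA] .
  define B where "B = (\<Sum>z\<in>carrier G. \<bar>c z\<bar>)"
  have Bb: "\<bar>c z\<bar> \<le> B" if "z \<in> carrier G" for z
    unfolding B_def by (rule member_le_sum[OF that _ fin]) simp
  have B0: "B \<ge> 0" unfolding B_def by (simp add: sum_nonneg)
  define M where "M = max (nat (2 * B)) (order G)"
  have prime_step: "c (y [^] q) = c y" if q: "prime q" "M < q" and y: "y \<in> carrier G" for q y
  proof -
    have nq: "\<not> q dvd order G"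
    proof
      assume "q dvd order G"
      then have "q \<le> order G" using order_pos by (simp add: dvd_imp_le)
      then show False using q unfolding M_def by simp
    qed
    have cq: "coprime (int q) ?n" using q(1) nq by (simp add: prime_imp_coprime)
    have invq: "\<forall>x\<in>carrier G. f (x [^] q) = f x"
      if "\<forall>x\<in>carrier G. \<forall>m. coprime m ?n \<longrightarrow> f (x [^] m) = f x" for f :: "'a \<Rightarrow> int"
    proof
      fix x assume x: "x \<in> carrier G"
      have "f (x [^] (int q)) = f x" using that x cq by blast
      then show "f (x [^] q) = f x" by (simp add: int_pow_int)
    qed
    have pcong: "\<forall>z\<in>carrier G. [pw G f q z = f z] (mod int q)"
      if fA: "f \<in> A" and finv: "\<forall>x\<in>carrier G. f (x [^] q) = f x" for f
    proof
      fix z assume z: "z \<in> carrier G"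
      obtain w where w: "w \<in> carrier G" "w [^] q = z"
        using pow_surj[OF _ z] q(1) nq by (metis prime_imp_coprime)
      have "[pw G f q (w [^] q) = f w] (mod int q)" by (rule frob[OF q(1) nq A_classfun[OF fA] w(1)])
      moreover have "f z = f w" using finv w by metis
      ultimately show "[pw G f q z = f z] (mod int q)" using w by simp
    qed
    have pa: "\<forall>z\<in>carrier G. [pw G a q z = a z] (mod int q)"
      using pcong[OF aA invq[OF ainv]] .
    have pb: "\<forall>z\<in>carrier G. [pw G b q z = b z] (mod int q)"
      using pcong[OF bA invq[OF binv]] .
    have "pw G c q = gmult G (pw G a q) (pw G b q)"
      unfolding c_def by (rule pw_gmult[OF A_central[OF bA]])
    then have "[pw G c q z = c z] (mod int q)" for z
      unfolding c_def using gmult_cong_mod[OF pa pb] by simp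
    then have "[c (y [^] q) = pw G c q (y [^] q)] (mod int q)" using cong_sym by blast
    moreover have "[pw G c q (y [^] q) = c y] (mod int q)" by (rule frob[OF q(1) nq cc y])
    ultimately have "[c (y [^] q) = c y] (mod int q)" by (rule cong_trans)
    moreover have "\<bar>c (y [^] q)\<bar> \<le> B" "\<bar>c y\<bar> \<le> B" using Bb y by auto
    moreover have "2 * B < int q" using q(2) B0 unfolding M_def by linarith
    ultimately show ?thesis by (rule small_cong_eq)
  qed
  have comp: "\<forall>y\<in>carrier G. c (y [^] k) = c y"
    if "k > 0" "\<forall>p. prime p \<longrightarrow> p dvd k \<longrightarrow> M < p" for k
    using that
  proof (induction k rule: less_induct)
    case (less k)
    show ?case
    proof (cases "k = 1")
      case True then show ?thesis by simp
    next
      case False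
      obtain p where p: "prime p" "p dvd k" using prime_factor_nat[OF False] by blast
      then obtain j where j: "k = p * j" by blast
      have p2: "p \<ge> 2" using p prime_ge_2_nat by blast
      have jpos: "j > 0" using j less.prems(1) by (cases j) auto
      have jk: "j < k" using j p2 jpos by simp
      have jp: "\<forall>p. prime p \<longrightarrow> p dvd j \<longrightarrow> M < p" using less.prems(2) j by auto
      have Mp: "M < p" using less.prems(2) p by blast
      show ?thesis
      proof
        fix y assume y: "y \<in> carrier G"
        have "c (y [^] k) = c ((y [^] j) [^] p)" using y j by (simp add: nat_pow_pow mult.commute)
        also have "\<dots> = c (y [^] j)" using prime_step[OF p(1) Mp] y by simp
        also have "\<dots> = c y" using less.IH[OF jk jpos jp] y by blast
        finally show "c (y [^] k) = c y" .
      qed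
    qed
  qed
  have "\<forall>x\<in>carrier G. \<forall>m. coprime m ?n \<longrightarrow> c (x [^] m) = c x"
  proof (intro ballI allI impI)
    fix x m assume x: "x \<in> carrier G" and m: "coprime m ?n"
    obtain k where k: "k > 0" "[int k = m] (mod ?n)" "\<forall>p. prime p \<longrightarrow> p dvd k \<longrightarrow> M < p"
      using exists_big_rep[OF order_pos m, of M] by blast
    have "x [^] m = x [^] (int k)" using pow_cong_int[OF x cong_sym[OF k(2)]] .
    also have "\<dots> = x [^] k" by (rule int_pow_int)
    finally show "c (x [^] m) = c x" using comp[OF k(1) k(3)] x by simp
  qed
  then show ?thesis using P_char cA unfolding c_def by blast
qed

end

theorem mainTheorem7:
  fixes G :: "('a, 'b) monoid_scheme" and A :: "('a \<Rightarrow> int) set" and S :: "'a set set"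
  assumes "group G" and "finite (carrier G)"
    and "S_ring G A S" and "central G A"
  defines "P \<equiv> tr G ` S"
  shows "is_partition G P
     \<and> S_ring G (zspan P) P \<and> central G (zspan P) \<and> zspan P \<subseteq> A
     \<and> zspan P = {a \<in> A. \<forall>m :: int. coprime m (int (card (carrier G))) \<longrightarrow> phi G S m a = a}"
proof -
  have "cs G A S" unfolding cs_def cs_axioms_def fgroup_def fgroup_axioms_def using assms by auto
  then interpret cs G A S .
  have ord: "card (carrier G) = order G" unfolding order_def ..
  have sub: "zspan P \<subseteq> A" unfolding P_def using P_char by blast
  have part: "is_partition G P" unfolding P_def by (rule partP)
  have one: "und {\<one>\<^bsub>G\<^esub>} \<in> zspan P"
    unfolding P_def P_char
  proof (intro conjI one_A ballI allI impI)
    fix x m assume x: "x \<in> carrier G" and m: "coprime m (int (order G))"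
    have "(x [^]\<^bsub>G\<^esub> m = \<one>\<^bsub>G\<^esub>) = (x = \<one>\<^bsub>G\<^esub>)"
    proof
      assume "x [^]\<^bsub>G\<^esub> m = \<one>\<^bsub>G\<^esub>"
      then have "x [^]\<^bsub>G\<^esub> m = \<one>\<^bsub>G\<^esub> [^]\<^bsub>G\<^esub> m" by simp
      then show "x = \<one>\<^bsub>G\<^esub>" using int_pow_inj[OF m x] by simp
    qed simp
    then show "und {\<one>\<^bsub>G\<^esub>} (x [^]\<^bsub>G\<^esub> m) = und {\<one>\<^bsub>G\<^esub>} x" by (simp add: und_def)
  qed
  have add: "(\<lambda>x. a x + b x) \<in> zspan P" if "a \<in> zspan P" "b \<in> zspan P" for a b
    using that add_A unfolding P_def P_char by simp
  have neg: "(\<lambda>x. - a x) \<in> zspan P" if "a \<in> zspan P" for a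
    using that neg_A unfolding P_def P_char by simp
  have mul: "gmult G a b \<in> zspan P" if "a \<in> zspan P" "b \<in> zspan P" for a b
    using that mult_P unfolding P_def by blast
  have oneP: "{\<one>\<^bsub>G\<^esub>} \<in> P" unfolding P_def using tr_one oneS by (metis image_eqI)
  have invP: "inv_set G Y \<in> P" if Y: "Y \<in> P" for Y
  proof -
    obtain X where X: "X \<in> S" "Y = tr G X" using Y unfolding P_def by blast
    then show ?thesis using tr_inv[OF S_sub[OF X(1)]] Y by simp
  qed
  have ZGsub: "zspan P \<subseteq> ZG G" using sub A_ZG by blast
  have c1: "\<forall>a\<in>zspan P. \<forall>b\<in>zspan P. (\<lambda>x. a x + b x) \<in> zspan P \<and> (\<lambda>x. - a x) \<in> zspan P
      \<and> gmult G a b \<in> zspan P" using add neg mul by blast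
  have c2: "\<forall>X\<in>P. inv_set G X \<in> P" using invP by blast
  have SR': "S_ring G (zspan P) P"
    unfolding S_ring_def
  proof (intro conjI)
    show "zspan P \<subseteq> ZG G" by (rule ZGsub)
    show "und {\<one>\<^bsub>G\<^esub>} \<in> zspan P" by (rule one)
    show "\<forall>a\<in>zspan P. \<forall>b\<in>zspan P. (\<lambda>x. a x + b x) \<in> zspan P \<and> (\<lambda>x. - a x) \<in> zspan P
      \<and> gmult G a b \<in> zspan P" by (rule c1)
    show "is_partition G P" by (rule part)
    show "{\<one>\<^bsub>G\<^esub>} \<in> P" by (rule oneP)
    show "\<forall>X\<in>P. inv_set G X \<in> P" by (rule c2)
    show "zspan P = zspan P" by (rule refl)
  qed
  have cen: "central G (zspan P)"
    unfolding central_def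
  proof (intro ballI)
    fix a f assume a: "a \<in> zspan P" and f: "f \<in> ZG G"
    have "a \<in> A" using a sub by blast
    then show "gmult G a f = gmult G f a" using A_central f by blast
  qed
  have eq: "zspan P = {a \<in> A. \<forall>m :: int. coprime m (int (card (carrier G))) \<longrightarrow> phi G S m a = a}"
  proof (intro equalityI subsetI)
    fix a assume a: "a \<in> zspan P"
    have aA: "a \<in> A" using a sub by blast
    have ainv: "\<forall>x\<in>carrier G. \<forall>m. coprime m (int (order G)) \<longrightarrow> a (x [^]\<^bsub>G\<^esub> m) = a x"
      using a unfolding P_def P_char by blast
    have "phi G S m a = a" if m: "coprime m (int (card (carrier G)))" for m
    proof -
      have m': "coprime m (int (order G))" using m ord by simp
      show ?thesis using phi_fix_iff[OF aA m'] ainv m' by blast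
    qed
    then show "a \<in> {a \<in> A. \<forall>m :: int. coprime m (int (card (carrier G))) \<longrightarrow> phi G S m a = a}"
      using aA by blast
  next
    fix a assume a: "a \<in> {a \<in> A. \<forall>m :: int. coprime m (int (card (carrier G))) \<longrightarrow> phi G S m a = a}"
    then have aA: "a \<in> A" by blast
    have "a (x [^]\<^bsub>G\<^esub> m) = a x" if x: "x \<in> carrier G" and m': "coprime m (int (order G))" for x m
    proof -
      have m: "coprime m (int (card (carrier G)))" using m' ord by simp
      have "phi G S m a = a" using a m by blast
      then show ?thesis using phi_fix_iff[OF aA m'] x by blast
    qed
    then show "a \<in> zspan P" unfolding P_def P_char using aA by blast
  qed
  show ?thesis
  proof (intro conjI)
    show "is_partition G P" by (rule part)
    show "S_ring G (zspan P) P" by (rule SR')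
    show "central G (zspan P)" by (rule cen)
    show "zspan P \<subseteq> A" by (rule sub)
    show "zspan P = {a \<in> A. \<forall>m :: int. coprime m (int (card (carrier G))) \<longrightarrow> phi G S m a = a}" by (rule eq)
  qed
qed


end
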